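(* Let $G$ be a locally compact group and let $\alpha$ be a (jointly continuous) action of $G$ on a locally compact Hausdorff space $M$; let $\alpha$ also denote the induced action on $A=C_\infty(M)$ given by $(\alpha_x f)(m)=f(\alpha_x^{-1}(m))$. Then the action $\alpha$ on the $C^*$-algebra $C_\infty(M)$ is proper (in the sense defined in the context) if and only if the action $\alpha$ on the space $M$ is proper, i.e. the map $M\times G\to M\times M$, $(m,x)\mapsto (m,\alpha_x(m))$, is proper (preimages of compact sets are compact).
   Context: $G$ carries a fixed left Haar measure $dx$. Let $\mathcal{B}$ be the set of $\lambda\in L^\infty(G)$ with compact support and $0\le\lambda\le 1$, directed by the pointwise order. For a strongly continuous action $\alpha$ of $G$ on a $C^*$-algebra $A$ and $\lambda\in\mathcal B$, $a\in A$, put $p_\lambda(a)=\int_G\lambda(x)\alpha_x(a)\,dx\in A$. An element $a\in A^+$ is called $\alpha$-proper if the net $(p_\lambda(a))_{\lambda\in\mathcal B}$ converges in the strict topology of the multiplier algebra $M(A)$ (a net $m_i\to m$ strictly iff $m_ia\to ma$ and $am_i\to am$ in norm for all $a\in A$). Let $\mathcal P_\alpha$ be the linear span of the $\alpha$-proper elements of $A^+$. The action $\alpha$ on $A$ is called proper if $\mathcal P_\alpha$ is dense in $A$. $C_\infty(M)$ denotes continuous functions vanishing at infinity. *)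

theory Defs
  imports "HOL-Analysis.Analysis"
begin

text \<open>The locally compact group G is a type of class topological_group_add (a general,
not necessarily commutative, topological group, written additively), with the whole
type as carrier.\<close>

definition left_haar_measure :: "'g::{topological_group_add,t2_space} measure \<Rightarrow> bool" where
  "left_haar_measure \<mu> \<longleftrightarrow>
     sets \<mu> = sets borel \<and>
     (\<forall>K. compact K \<longrightarrow> emeasure \<mu> K < \<infinity>) \<and>
     (\<forall>E\<in>sets borel. emeasure \<mu> E = (INF U\<in>{U. open U \<and> E \<subseteq> U}. emeasure \<mu> U)) \<and>
     (\<forall>U. open U \<longrightarrow> emeasure \<mu> U = (SUP K\<in>{K. compact K \<and> K \<subseteq> U}. emeasure \<mu> K)) \<and>
     emeasure \<mu> UNIV \<noteq> 0 \<and>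
     (\<forall>x. \<forall>E\<in>sets borel. emeasure \<mu> ((\<lambda>y. x + y) ` E) = emeasure \<mu> E)"

definition continuous_action :: "('g::topological_group_add \<Rightarrow> 'm::topological_space \<Rightarrow> 'm) \<Rightarrow> bool" where
  "continuous_action \<alpha> \<longleftrightarrow>
     (\<forall>m. \<alpha> 0 m = m) \<and> (\<forall>x y m. \<alpha> (x + y) m = \<alpha> x (\<alpha> y m)) \<and>
     continuous_on UNIV (\<lambda>(x, m). \<alpha> x m)"

definition proper_space_action :: "('g::topological_space \<Rightarrow> 'm::topological_space \<Rightarrow> 'm) \<Rightarrow> bool" where
  "proper_space_action \<alpha> \<longleftrightarrow>
     (\<forall>K::('m \<times> 'm) set. compact K \<longrightarrow> compact {(m, x). (m, \<alpha> x m) \<in> K})"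

definition C0 :: "('m::topological_space \<Rightarrow> complex) set" where
  "C0 = {f. continuous_on UNIV f \<and>
            (\<forall>e>0. \<exists>K. compact K \<and> (\<forall>m. m \<notin> K \<longrightarrow> cmod (f m) < e))}"

definition C0_pos :: "('m::topological_space \<Rightarrow> complex) set" where
  "C0_pos = {f \<in> C0. \<forall>m. f m \<in> \<real> \<and> Re (f m) \<ge> 0}"

definition induced_action :: "('g::group_add \<Rightarrow> 'm \<Rightarrow> 'm) \<Rightarrow> 'g \<Rightarrow> ('m \<Rightarrow> complex) \<Rightarrow> ('m \<Rightarrow> complex)" where
  "induced_action \<alpha> x f = (\<lambda>m. f (\<alpha> (- x) m))"

text \<open>The index set B: representatives of elements of L-infinity(G) with compact support
and values in [0,1].\<close>
definition Bset :: "('g::topological_space \<Rightarrow> real) set" where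
  "Bset = {l. l \<in> borel_measurable borel \<and> (\<forall>x. 0 \<le> l x \<and> l x \<le> 1) \<and>
              (\<exists>K. compact K \<and> (\<forall>x. x \<notin> K \<longrightarrow> l x = 0))}"

definition Ble :: "'g measure \<Rightarrow> ('g \<Rightarrow> real) \<Rightarrow> ('g \<Rightarrow> real) \<Rightarrow> bool" where
  "Ble \<mu> l1 l2 \<longleftrightarrow> (AE x in \<mu>. l1 x \<le> l2 x)"

text \<open>p_lambda(a) = integral of lambda(x) alpha_x(a) dx; the A-valued integral is
evaluated pointwise.\<close>
definition p_lam :: "'g::group_add measure \<Rightarrow> ('g \<Rightarrow> 'm \<Rightarrow> 'm) \<Rightarrow> ('g \<Rightarrow> real) \<Rightarrow>
                      ('m \<Rightarrow> complex) \<Rightarrow> ('m \<Rightarrow> complex)" where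
  "p_lam \<mu> \<alpha> l a = (\<lambda>m. LINT x|\<mu>. complex_of_real (l x) * induced_action \<alpha> x a m)"

text \<open>Multiplier algebra of C0(M) as double centralizers (L,R).\<close>
definition double_centralizer :: "(('m::topological_space \<Rightarrow> complex) \<Rightarrow> ('m \<Rightarrow> complex)) \<Rightarrow>
                                 (('m \<Rightarrow> complex) \<Rightarrow> ('m \<Rightarrow> complex)) \<Rightarrow> bool" where
  "double_centralizer L R \<longleftrightarrow> L ` C0 \<subseteq> C0 \<and> R ` C0 \<subseteq> C0 \<and>
     (\<forall>a\<in>C0. \<forall>b\<in>C0. (\<lambda>m. a m * L b m) = (\<lambda>m. R a m * b m))"

text \<open>Norm convergence of a net indexed by (Bset, Ble mu) in C0(M) (sup norm).\<close>
definition net_tendsto :: "'g::topological_space measure \<Rightarrow> (('g \<Rightarrow> real) \<Rightarrow> ('m \<Rightarrow> complex)) \<Rightarrow>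
                            ('m \<Rightarrow> complex) \<Rightarrow> bool" where
  "net_tendsto \<mu> F c \<longleftrightarrow>
     (\<forall>e>0. \<exists>l0\<in>Bset. \<forall>l\<in>Bset. Ble \<mu> l0 l \<longrightarrow> (\<forall>m. cmod (F l m - c m) \<le> e))"

text \<open>Strict convergence of the net (p_lambda(a)) to the multiplier (L,R).\<close>
definition alpha_proper_elem :: "'g::{topological_group_add} measure \<Rightarrow> ('g \<Rightarrow> 'm::topological_space \<Rightarrow> 'm) \<Rightarrow>
                                  ('m \<Rightarrow> complex) \<Rightarrow> bool" where
  "alpha_proper_elem \<mu> \<alpha> a \<longleftrightarrow> a \<in> C0_pos \<and>
     (\<exists>L R. double_centralizer L R \<and>
        (\<forall>b\<in>C0. net_tendsto \<mu> (\<lambda>l. (\<lambda>m. p_lam \<mu> \<alpha> l a m * b m)) (L b) \<and>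
                 net_tendsto \<mu> (\<lambda>l. (\<lambda>m. b m * p_lam \<mu> \<alpha> l a m)) (R b)))"

definition P_alpha :: "'g::{topological_group_add} measure \<Rightarrow> ('g \<Rightarrow> 'm::topological_space \<Rightarrow> 'm) \<Rightarrow>
                       ('m \<Rightarrow> complex) set" where
  "P_alpha \<mu> \<alpha> = {g. \<exists>n::nat. \<exists>c h. (\<forall>i<n. alpha_proper_elem \<mu> \<alpha> (h i)) \<and>
                       g = (\<lambda>m. \<Sum>i<n. c i * h i m)}"

definition proper_C0_action :: "'g::{topological_group_add} measure \<Rightarrow> ('g \<Rightarrow> 'm::topological_space \<Rightarrow> 'm) \<Rightarrow> bool" where
  "proper_C0_action \<mu> \<alpha> \<longleftrightarrow>
     (\<forall>f\<in>C0. \<forall>e>0. \<exists>g\<in>P_alpha \<mu> \<alpha>. \<forall>m. cmod (f m - g m) < e)"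

end

theory Submission
  imports Defs
begin

lemma haar_sets: "left_haar_measure \<mu> \<Longrightarrow> sets \<mu> = sets borel"
  unfolding left_haar_measure_def by (elim conjE) assumption

lemma haar_compact_fin0: "left_haar_measure \<mu> \<Longrightarrow> \<forall>K. compact K \<longrightarrow> emeasure \<mu> K < \<infinity>"
  unfolding left_haar_measure_def by (elim conjE) assumption

lemma haar_compact_fin: "left_haar_measure \<mu> \<Longrightarrow> compact K \<Longrightarrow> emeasure \<mu> K < \<infinity>"
  using haar_compact_fin0 by blast

lemma haar_nonzero: "left_haar_measure \<mu> \<Longrightarrow> emeasure \<mu> UNIV \<noteq> 0"
  unfolding left_haar_measure_def by (elim conjE) assumption

lemma haar_inner0: "left_haar_measure \<mu> \<Longrightarrow>
   \<forall>U. open U \<longrightarrow> emeasure \<mu> U = (SUP K\<in>{K. compact K \<and> K \<subseteq> U}. emeasure \<mu> K)"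
  unfolding left_haar_measure_def by (elim conjE) assumption

lemma haar_inner: "left_haar_measure \<mu> \<Longrightarrow> open U \<Longrightarrow>
   emeasure \<mu> U = (SUP K\<in>{K. compact K \<and> K \<subseteq> U}. emeasure \<mu> K)"
  using haar_inner0 by blast

lemma haar_transl0: "left_haar_measure \<mu> \<Longrightarrow>
   \<forall>x. \<forall>E\<in>sets borel. emeasure \<mu> ((\<lambda>y. x + y) ` E) = emeasure \<mu> E"
  unfolding left_haar_measure_def by (elim conjE) assumption

lemma haar_transl: "left_haar_measure \<mu> \<Longrightarrow> E \<in> sets borel \<Longrightarrow>
   emeasure \<mu> ((\<lambda>y. x + y) ` E) = emeasure \<mu> E"
  using haar_transl0 by blast

lemma transl_image_eq: "(\<lambda>y. (x::'g::group_add) + y) ` E = {y. -x + y \<in> E}"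
proof (intro set_eqI iffI)
  fix y assume "y \<in> (\<lambda>y. x + y) ` E"
  then obtain e where "e \<in> E" "y = x + e" by auto
  then show "y \<in> {y. -x + y \<in> E}" by (simp add: add.assoc[symmetric])
next
  fix y assume "y \<in> {y. -x + y \<in> E}"
  then have "x + (-x + y) = y" "-x + y \<in> E" by (simp_all add: add.assoc[symmetric])
  then show "y \<in> (\<lambda>y. x + y) ` E" by (metis image_eqI)
qed

lemma open_transl: "open E \<Longrightarrow> open ((\<lambda>y. (x::'g::topological_group_add) + y) ` E)"
proof -
  assume "open E"
  have "{y. -x + y \<in> E} = (\<lambda>y. -x + y) -` E" by auto
  moreover have "open ((\<lambda>y. -x + y) -` E)"
    by (rule open_vimage[OF \<open>open E\<close>]) (intro continuous_intros)
  ultimately show ?thesis by (simp add: transl_image_eq)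
qed

lemma haar_open_pos:
  fixes \<mu> :: "'g::{topological_group_add,t2_space} measure"
  assumes h: "left_haar_measure \<mu>" and U: "open U" "u \<in> U"
  shows "emeasure \<mu> U > 0"
proof (rule ccontr)
  assume "\<not> emeasure \<mu> U > 0"
  then have U0: "emeasure \<mu> U = 0" by (simp add: not_less)
  define T where "T = (\<lambda>k. (\<lambda>y. k + y) ` ((\<lambda>y. -u + y) ` U))"
  have Topen: "open (T k)" for k unfolding T_def by (intro open_transl U)
  have Tsets: "T k \<in> sets \<mu>" for k using Topen[of k] haar_sets[OF h] by simp
  have T0: "emeasure \<mu> (T k) = 0" for k
  proof -
    have o1: "open ((\<lambda>y. -u + y) ` U)" by (intro open_transl U)
    have "emeasure \<mu> (T k) = emeasure \<mu> ((\<lambda>y. -u + y) ` U)"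
      unfolding T_def by (rule haar_transl[OF h]) (use o1 in simp)
    also have "\<dots> = emeasure \<mu> U" by (rule haar_transl[OF h]) (use U in simp)
    finally show ?thesis using U0 by simp
  qed
  have Kzero: "emeasure \<mu> K = 0" if K: "compact K" for K
  proof -
    have cov: "K \<subseteq> \<Union> (T ` K)"
    proof
      fix k assume "k \<in> K"
      have "k = k + (-u + u)" by simp
      then have "k \<in> T k" unfolding T_def using U(2) by blast
      then show "k \<in> \<Union> (T ` K)" using \<open>k \<in> K\<close> by blast
    qed
    obtain F where F: "F \<subseteq> K" "finite F" "K \<subseteq> \<Union> (T ` F)"
      using compactE_image[OF K, of K T, OF Topen cov] by blast
    have "emeasure \<mu> K \<le> emeasure \<mu> (\<Union> (T ` F))"
      by (rule emeasure_mono[OF F(3)]) (use F(2) Tsets in auto)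
    also have "\<dots> \<le> (\<Sum>k\<in>F. emeasure \<mu> (T k))"
      by (rule emeasure_subadditive_finite) (use F(2) Tsets in auto)
    also have "\<dots> = 0" using T0 by simp
    finally show ?thesis by simp
  qed
  have "emeasure \<mu> UNIV = (SUP K\<in>{K. compact K \<and> K \<subseteq> UNIV}. emeasure \<mu> K)"
    using haar_inner[OF h] by blast
  also have "\<dots> = 0" 
  proof (rule antisym)
    show "(SUP K\<in>{K. compact K \<and> K \<subseteq> UNIV}. emeasure \<mu> K) \<le> 0"
      by (rule SUP_least) (simp add: Kzero)
  qed simp
  finally show False using haar_nonzero[OF h] by simp
qed

lemma haar_space: "left_haar_measure \<mu> \<Longrightarrow> space \<mu> = UNIV"
  using sets_eq_imp_space_eq[OF haar_sets] by simp

lemma haar_meas: "left_haar_measure \<mu> \<Longrightarrow> f \<in> borel_measurable borel \<Longrightarrow> f \<in> borel_measurable \<mu>"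
  using measurable_cong_sets[OF haar_sets refl] by blast

lemma compact_in_sets:
  fixes \<mu> :: "'g::{topological_group_add,t2_space} measure"
  shows "left_haar_measure \<mu> \<Longrightarrow> compact K \<Longrightarrow> K \<in> sets \<mu>"
  using haar_sets compact_imp_closed borel_closed by blast

lemma haar_int_bounded:
  fixes \<mu> :: "'g::{topological_group_add,t2_space} measure" and f :: "'g \<Rightarrow> real"
  assumes h: "left_haar_measure \<mu>" and f: "f \<in> borel_measurable borel" and K: "compact K"
    and z: "\<And>x. x \<notin> K \<Longrightarrow> f x = 0" and b: "\<And>x. \<bar>f x\<bar> \<le> B"
  shows "integrable \<mu> f"
proof (rule Bochner_Integration.integrable_bound)
  show "integrable \<mu> (\<lambda>x. B * indicator K x)"
    by (intro integrable_mult_right integrable_real_indicator compact_in_sets[OF h K]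
        haar_compact_fin[OF h K])
  show "f \<in> borel_measurable \<mu>" by (rule haar_meas[OF h f])
  show "AE x in \<mu>. norm (f x) \<le> norm (B * indicator K x)"
  proof (rule AE_I2)
    fix x
    have "0 \<le> B" using b[of x] by linarith
    then show "norm (f x) \<le> norm (B * indicator K x)"
      using b[of x] z[of x] by (cases "x \<in> K") auto
  qed
qed

lemma haar_int_indicator:
  fixes \<mu> :: "'g::{topological_group_add,t2_space} measure"
  shows "left_haar_measure \<mu> \<Longrightarrow> compact K \<Longrightarrow> integral\<^sup>L \<mu> (\<lambda>x. c * indicator K x) = c * measure \<mu> K"
  by (simp add: integral_mult_right_zero integral_indicator haar_space)

lemma haar_measure_transl:
  fixes \<mu> :: "'g::{topological_group_add,t2_space} measure"
  shows "left_haar_measure \<mu> \<Longrightarrow> compact K \<Longrightarrow> measure \<mu> ((\<lambda>y. x + y) ` K) = measure \<mu> K"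
  unfolding measure_def using haar_transl compact_imp_closed borel_closed by metis

lemma compact_transl: "compact K \<Longrightarrow> compact ((\<lambda>y. (x::'g::topological_group_add) + y) ` K)"
  by (rule compact_continuous_image) (auto intro!: continuous_intros)

lemma unif_tube:
  fixes f :: "'a::topological_space \<Rightarrow> 'b::topological_space \<Rightarrow> real"
  assumes cf: "continuous_on UNIV (\<lambda>p. f (fst p) (snd p))" and C: "compact C" and e: "e > 0"
  shows "\<exists>V. open V \<and> y0 \<in> V \<and> (\<forall>x\<in>C. \<forall>y\<in>V. \<bar>f x y - f x y0\<bar> < e)"
proof -
  define N where "N = (\<lambda>x. (\<lambda>p. f (fst p) (snd p)) -` ball (f x y0) (e/2))"
  have Nopen: "open (N x)" for x unfolding N_def by (rule open_vimage[OF _ cf]) simp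
  have "\<exists>A B. open A \<and> open B \<and> x \<in> A \<and> y0 \<in> B \<and> A \<times> B \<subseteq> N x" for x
  proof -
    have "(x, y0) \<in> N x" unfolding N_def using e by simp
    then show ?thesis using open_prod_elim[OF Nopen] by (metis mem_Sigma_iff)
  qed
  then obtain A B where AB: "\<And>x. open (A x) \<and> open (B x) \<and> x \<in> A x \<and> y0 \<in> B x \<and> A x \<times> B x \<subseteq> N x"
    by metis
  have cov: "C \<subseteq> \<Union> (A ` C)" using AB by blast
  obtain F where F: "F \<subseteq> C" "finite F" "C \<subseteq> \<Union> (A ` F)"
    using compactE_image[OF C, of C A] AB cov by blast
  define V where "V = \<Inter> (B ` F)"
  have "open V" unfolding V_def using F(2) AB by (intro open_Inter) auto
  moreover have "y0 \<in> V" unfolding V_def using AB by auto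
  moreover have "\<forall>x\<in>C. \<forall>y\<in>V. \<bar>f x y - f x y0\<bar> < e"
  proof (intro ballI)
    fix x y assume x: "x \<in> C" and y: "y \<in> V"
    then obtain z where z: "z \<in> F" "x \<in> A z" using F by blast
    have "y \<in> B z" using y z unfolding V_def by blast
    then have "(x, y) \<in> N z" "(x, y0) \<in> N z" using AB[of z] z by blast+
    then have "dist (f x y) (f z y0) < e/2" "dist (f x y0) (f z y0) < e/2"
      unfolding N_def by (auto simp: dist_commute)
    then show "\<bar>f x y - f x y0\<bar> < e" unfolding dist_real_def abs_less_iff by auto
  qed
  ultimately show ?thesis by blast
qed

lemma ind_Bset:
  fixes C :: "'g::t2_space set"
  shows "compact C \<Longrightarrow> indicator C \<in> Bset"
  unfolding Bset_def
  by (auto intro!: borel_measurable_indicator borel_closed compact_imp_closed simp: indicator_def)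

lemma Bset_le_ind:
  fixes C :: "'g::t2_space set"
  assumes "l \<in> Bset" "compact C" "\<And>x. x \<notin> C \<Longrightarrow> l x = 0"
  shows "Ble \<mu> l (indicator C)"
  unfolding Ble_def
proof (rule AE_I2)
  fix x show "l x \<le> indicator C x"
    using assms unfolding Bset_def by (cases "x \<in> C") auto
qed

lemma action_facts:
  fixes \<alpha> :: "'g::topological_group_add \<Rightarrow> 'm::topological_space \<Rightarrow> 'm"
  assumes act: "continuous_action \<alpha>"
  shows "\<And>m. \<alpha> 0 m = m" "\<And>x y m. \<alpha> (x + y) m = \<alpha> x (\<alpha> y m)"
    "continuous_on UNIV (\<lambda>p. \<alpha> (fst p) (snd p))"
    "continuous_on UNIV (\<lambda>p. \<alpha> (- fst p) (snd p))"
    "\<And>m. continuous_on UNIV (\<lambda>x. \<alpha> (-x) m)"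
    "\<And>x. continuous_on UNIV (\<lambda>m. \<alpha> x m)"
proof -
  show "\<And>m. \<alpha> 0 m = m" "\<And>x y m. \<alpha> (x + y) m = \<alpha> x (\<alpha> y m)"
    using act unfolding continuous_action_def by blast+
  have e: "(\<lambda>(x, m). \<alpha> x m) = (\<lambda>p. \<alpha> (fst p) (snd p))" by (rule ext) (simp add: split_beta)
  have c: "continuous_on UNIV (\<lambda>p. \<alpha> (fst p) (snd p))"
    using act unfolding continuous_action_def e by (elim conjE)
  then show "continuous_on UNIV (\<lambda>p. \<alpha> (fst p) (snd p))" .
  have "continuous_on UNIV (\<lambda>p. (\<lambda>q. \<alpha> (fst q) (snd q)) ((\<lambda>p::'g\<times>'m. (- fst p, snd p)) p))"
    by (rule continuous_on_compose2[OF c]) (intro continuous_intros, simp)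
  then show c2: "continuous_on UNIV (\<lambda>p. \<alpha> (- fst p) (snd p))" by simp
  show "continuous_on UNIV (\<lambda>m. \<alpha> x m)" for x
  proof -
    have "continuous_on UNIV (\<lambda>p. (\<lambda>q. \<alpha> (fst q) (snd q)) ((\<lambda>m::'m. (x, m)) p))"
      by (rule continuous_on_compose2[OF c]) (intro continuous_intros, simp)
    then show ?thesis by simp
  qed
  show "continuous_on UNIV (\<lambda>x. \<alpha> (-x) m)" for m
  proof -
    have "continuous_on UNIV (\<lambda>p. (\<lambda>q. \<alpha> (- fst q) (snd q)) ((\<lambda>x::'g. (x, m)) p))"
      by (rule continuous_on_compose2[OF c2]) (intro continuous_intros, simp)
    then show ?thesis by simp
  qed
qed

lemma small_mult:
  fixes B c e p :: real
  assumes "0 \<le> B" "0 \<le> c" "c < e / (B + 1)" "\<bar>p\<bar> \<le> B"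
  shows "\<bar>p\<bar> * c < e"
proof -
  have "c * (B + 1) < e" using assms(3) assms(1) by (simp add: pos_less_divide_eq)
  moreover have "\<bar>p\<bar> * c \<le> B * c" using assms by (intro mult_right_mono) auto
  ultimately show ?thesis using assms(2) by (simp add: algebra_simps)
qed

lemma proper_elem:
  fixes \<mu> :: "'g::{topological_group_add,t2_space} measure"
    and \<alpha> :: "'g \<Rightarrow> 'm::t2_space \<Rightarrow> 'm"
  assumes lcM: "locally_compact_space (euclidean :: 'm topology)"
    and h: "left_haar_measure \<mu>" and act: "continuous_action \<alpha>"
    and prp: "proper_space_action \<alpha>"
    and a: "a \<in> C0_pos" and S: "compact S" and aS: "\<And>m. m \<notin> S \<Longrightarrow> a m = 0"
  shows "alpha_proper_elem \<mu> \<alpha> a"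
proof -
  note af = action_facts[OF act]
  define A where "A = (\<lambda>m. Re (a m))"
  have aC0: "a \<in> C0" using a unfolding C0_pos_def by blast
  have aA: "a m = complex_of_real (A m)" for m
    using a unfolding C0_pos_def A_def by (auto intro: of_real_Re[symmetric])
  have A0: "0 \<le> A m" for m using a unfolding C0_pos_def A_def by blast
  have AS: "m \<notin> S \<Longrightarrow> A m = 0" for m using aS unfolding A_def by simp
  have contA: "continuous_on UNIV A"
    using aC0 unfolding C0_def A_def by (auto intro!: continuous_intros)
  obtain Ma where Ma: "\<And>m. A m \<le> Ma" and Ma0: "0 \<le> Ma"
  proof -
    have "compact (A ` S)" by (rule compact_continuous_image[OF continuous_on_subset[OF contA] S]) simp
    then obtain c where c: "\<forall>y\<in>A ` S. norm y \<le> c" using compact_imp_bounded bounded_iff by metis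
    have "A m \<le> max 0 c" for m
      using c AS[of m] by (cases "m \<in> S") force+
    then show ?thesis using that by force
  qed
  define Cs where "Cs = (\<lambda>K. uminus ` snd ` {(m, x). (m, \<alpha> x m) \<in> K \<times> S})"
  have Cs_compact: "compact K \<Longrightarrow> compact (Cs K)" for K
  proof -
    assume K: "compact K"
    have "compact {(m, x). (m, \<alpha> x m) \<in> K \<times> S}"
      using prp compact_Times[OF K S] unfolding proper_space_action_def by blast
    then show ?thesis unfolding Cs_def
      by (intro compact_continuous_image continuous_intros)
  qed
  have Cs_mem: "x \<in> Cs K" if "m \<in> K" "A (\<alpha> (-x) m) \<noteq> 0" for K m x
  proof -
    have "\<alpha> (-x) m \<in> S" using that AS by blast
    then have "(m, -x) \<in> {(m, x). (m, \<alpha> x m) \<in> K \<times> S}" using that by simp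
    then have "-x \<in> snd ` {(m, x). (m, \<alpha> x m) \<in> K \<times> S}" by force
    then have "- (-x) \<in> Cs K" unfolding Cs_def by blast
    then show ?thesis by simp
  qed
  define Z where "Z = Cs S"
  have Zc: "compact Z" unfolding Z_def by (rule Cs_compact[OF S])
  define B where "B = Ma * measure \<mu> Z"
  have B0: "0 \<le> B" unfolding B_def using Ma0 by simp
  define P where "P = (\<lambda>l m. LINT x|\<mu>. l x * A (\<alpha> (-x) m))"
  have measF: "(\<lambda>x. A (\<alpha> (-x) m)) \<in> borel_measurable borel" for m
    by (rule borel_measurable_continuous_onI, rule continuous_on_compose2[OF contA af(5)]) auto
  have intg: "integrable \<mu> (\<lambda>x. l x * A (\<alpha> (-x) m))"
    if l: "l \<in> borel_measurable borel" "\<And>x. \<bar>l x\<bar> \<le> 1" for l m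
  proof (rule haar_int_bounded[OF h _ Cs_compact[OF compact_sing[of m]]])
    show "(\<lambda>x. l x * A (\<alpha> (- x) m)) \<in> borel_measurable borel"
      using l(1) measF by measurable
    show "x \<notin> Cs {m} \<Longrightarrow> l x * A (\<alpha> (- x) m) = 0" for x
      using Cs_mem[of m "{m}" x] by auto
    show "\<bar>l x * A (\<alpha> (- x) m)\<bar> \<le> Ma" for x
    proof -
      have "\<bar>l x * A (\<alpha> (- x) m)\<bar> = \<bar>l x\<bar> * A (\<alpha> (- x) m)" using A0 by (simp add: abs_mult)
      also have "\<dots> \<le> 1 * Ma" using l(2)[of x] Ma[of "\<alpha> (-x) m"] A0[of "\<alpha> (-x) m"]
        by (intro mult_mono) auto
      finally show ?thesis by simp
    qed
  qed
  have Bset_meas: "l \<in> borel_measurable borel" "\<And>x. \<bar>l x\<bar> \<le> 1" "\<And>x. 0 \<le> l x" "\<And>x. l x \<le> 1"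
    if "l \<in> Bset" for l using that unfolding Bset_def by auto
  define phi where "phi = P (\<lambda>_. 1)"
  have intg1: "integrable \<mu> (\<lambda>x. 1 * A (\<alpha> (-x) m))" for m by (rule intg) auto
  have phi_B: "phi m \<le> B" for m
  proof -
    obtain x0 where x0: "\<And>x. A (\<alpha> (-x) m) \<noteq> 0 \<Longrightarrow> x \<in> (\<lambda>w. x0 + w) ` Z"
    proof (cases "\<exists>x1. \<alpha> (-x1) m \<in> S")
      case False
      then show ?thesis using that AS by blast
    next
      case True
      then obtain x1 where x1: "\<alpha> (-x1) m \<in> S" by blast
      have "x \<in> (\<lambda>w. x1 + w) ` Z" if "A (\<alpha> (-x) m) \<noteq> 0" for x
      proof -
        have e1: "\<alpha> (-x + x1) (\<alpha> (-x1) m) = \<alpha> (-x) m"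
          by (simp only: af(2)[symmetric] add.assoc add.right_inverse add_0_right)
        have "A (\<alpha> (-(-(-x + x1))) (\<alpha> (-x1) m)) \<noteq> 0" using that e1 by simp
        then have "-(-x + x1) \<in> Z" unfolding Z_def by (rule Cs_mem[OF x1])
        then have "-x1 + x \<in> Z" by (simp add: minus_add)
        moreover have "x = x1 + (-x1 + x)" by (simp add: add.assoc[symmetric])
        ultimately show ?thesis by blast
      qed
      then show ?thesis using that by blast
    qed
    have Zt: "compact ((\<lambda>w. x0 + w) ` Z)" by (rule compact_transl[OF Zc])
    have "phi m = LINT x|\<mu>. 1 * A (\<alpha> (-x) m)" unfolding phi_def P_def ..
    also have "\<dots> \<le> LINT x|\<mu>. Ma * indicator ((\<lambda>w. x0 + w) ` Z) x"
    proof (rule integral_mono[OF intg1])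
      show "integrable \<mu> (\<lambda>x. Ma * indicator ((\<lambda>w. x0 + w) ` Z) x)"
        by (intro integrable_mult_right integrable_real_indicator compact_in_sets[OF h Zt]
            haar_compact_fin[OF h Zt])
      show "1 * A (\<alpha> (- x) m) \<le> Ma * indicator ((\<lambda>w. x0 + w) ` Z) x" for x
        using x0[of x] Ma[of "\<alpha> (-x) m"] by (cases "x \<in> (\<lambda>w. x0 + w) ` Z") auto
    qed
    also have "\<dots> = Ma * measure \<mu> ((\<lambda>w. x0 + w) ` Z)" by (rule haar_int_indicator[OF h Zt])
    also have "\<dots> = B" unfolding B_def using haar_measure_transl[OF h Zc] by simp
    finally show ?thesis .
  qed
  have P_bounds: "0 \<le> P l m \<and> P l m \<le> phi m" if l: "l \<in> Bset" for l m
  proof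
    show "0 \<le> P l m" unfolding P_def
      by (rule integral_nonneg_AE, rule AE_I2) (use Bset_meas[OF l] A0 in auto)
    show "P l m \<le> phi m" unfolding P_def phi_def
    proof (rule integral_mono[OF intg[OF Bset_meas(1,2)[OF l]] intg1])
      fix x show "l x * A (\<alpha> (- x) m) \<le> 1 * A (\<alpha> (- x) m)"
        using Bset_meas(4)[OF l, of x] A0[of "\<alpha> (-x) m"] by (intro mult_right_mono) auto
    qed
  qed
  have phi0: "0 \<le> phi m" for m
    unfolding phi_def P_def by (rule integral_nonneg_AE, rule AE_I2) (use A0 in auto)
  have P_eq: "P l m = phi m" if K: "compact K" and m: "m \<in> K" and l: "l \<in> Bset"
    and le: "Ble \<mu> (indicator (Cs K)) l" for K l m
    unfolding P_def phi_def
  proof (rule integral_cong_AE)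
    show "(\<lambda>x. l x * A (\<alpha> (- x) m)) \<in> borel_measurable \<mu>"
      by (rule borel_measurable_integrable[OF intg[OF Bset_meas(1,2)[OF l]]])
    show "(\<lambda>x. 1 * A (\<alpha> (- x) m)) \<in> borel_measurable \<mu>"
      by (rule borel_measurable_integrable[OF intg1])
    show "AE x in \<mu>. l x * A (\<alpha> (- x) m) = 1 * A (\<alpha> (- x) m)"
      using le unfolding Ble_def
    proof (rule AE_mp[OF _ AE_I2], intro impI)
      fix x assume i: "indicator (Cs K) x \<le> l x"
      show "l x * A (\<alpha> (- x) m) = 1 * A (\<alpha> (- x) m)"
      proof (cases "x \<in> Cs K")
        case True
        then have "l x = 1" using i Bset_meas(4)[OF l, of x] by simp
        then show ?thesis by simp
      next
        case False
        then show ?thesis using Cs_mem[OF m, of x] by auto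
      qed
    qed
  qed
  have phi_cont: "continuous_on UNIV phi"
  proof -
    have "isCont phi m0" for m0
    proof -
      have "\<forall>x::'m. \<exists>U. open U \<and> (\<exists>K. compact K \<and> x \<in> U \<and> U \<subseteq> K)"
        using lcM unfolding locally_compact_space_def by (simp add: compactin_euclidean_iff)
      then obtain U L where UL: "open U" "compact L" "m0 \<in> U" "U \<subseteq> L"
        by blast
      define C where "C = Cs L"
      have Cc: "compact C" unfolding C_def by (rule Cs_compact[OF UL(2)])
      have phiL: "phi m = LINT x|\<mu>. indicator C x * A (\<alpha> (-x) m)" if "m \<in> L" for m
        unfolding phi_def P_def
      proof (rule Bochner_Integration.integral_cong[OF refl])
        fix x show "1 * A (\<alpha> (- x) m) = indicator C x * A (\<alpha> (- x) m)"
          using Cs_mem[OF that, of x] unfolding C_def by (cases "x \<in> Cs L") auto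
      qed
      show ?thesis unfolding continuous_at tendsto_iff
      proof (intro allI impI)
        fix e :: real assume e: "e > 0"
        define e' where "e' = e / (measure \<mu> C + 1)"
        have mC: "0 \<le> measure \<mu> C" by simp
        have e': "e' > 0" unfolding e'_def by (rule divide_pos_pos[OF e]) (use mC in linarith)
        have cf: "continuous_on UNIV (\<lambda>p. A (\<alpha> (- fst p) (snd p)))"
          by (rule continuous_on_compose2[OF contA af(4)]) auto
        obtain V where V: "open V" "m0 \<in> V" "\<And>x m. x \<in> C \<Longrightarrow> m \<in> V \<Longrightarrow>
            \<bar>A (\<alpha> (-x) m) - A (\<alpha> (-x) m0)\<bar> < e'"
          using unif_tube[of "\<lambda>x m. A (\<alpha> (-x) m)", OF _ Cc e', of m0] cf by auto
        have "dist (phi m) (phi m0) < e" if m: "m \<in> U \<inter> V" for m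
        proof -
          have mL: "m \<in> L" "m0 \<in> L" using m UL by auto
          have "phi m - phi m0 = LINT x|\<mu>. indicator C x * (A (\<alpha> (-x) m) - A (\<alpha> (-x) m0))"
            unfolding phiL[OF mL(1)] phiL[OF mL(2)]
            by (subst Bochner_Integration.integral_diff[symmetric])
               (auto intro!: intg simp: algebra_simps borel_measurable_indicator
                  borel_closed compact_imp_closed Cc)
          have indm: "indicator C \<in> borel_measurable borel" "\<And>x. \<bar>indicator C x :: real\<bar> \<le> 1"
            by (auto intro!: borel_measurable_indicator borel_closed compact_imp_closed Cc
                simp: indicator_def)
          have i1: "integrable \<mu> (\<lambda>x. indicator C x * A (\<alpha> (-x) m) - indicator C x * A (\<alpha> (-x) m0))"
            by (intro Bochner_Integration.integrable_diff intg indm)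
          then have i2: "integrable \<mu> (\<lambda>x. indicator C x * (A (\<alpha> (-x) m) - A (\<alpha> (-x) m0)))"
            by (simp add: right_diff_distrib)
          have "\<bar>phi m - phi m0\<bar> = \<bar>LINT x|\<mu>. indicator C x * (A (\<alpha> (-x) m) - A (\<alpha> (-x) m0))\<bar>"
            using \<open>phi m - phi m0 = _\<close> by simp
          also have "\<dots> \<le> LINT x|\<mu>. \<bar>indicator C x * (A (\<alpha> (-x) m) - A (\<alpha> (-x) m0))\<bar>"
            by (rule integral_abs_bound)
          also have "\<dots> \<le> LINT x|\<mu>. e' * indicator C x"
          proof (rule integral_mono)
            show "integrable \<mu> (\<lambda>x. \<bar>indicator C x * (A (\<alpha> (-x) m) - A (\<alpha> (-x) m0))\<bar>)"
              by (rule integrable_abs[OF i2])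
            show "integrable \<mu> (\<lambda>x. e' * indicator C x)"
              by (intro integrable_mult_right integrable_real_indicator compact_in_sets[OF h Cc]
                  haar_compact_fin[OF h Cc])
            fix x
            have "m \<in> V" using m by blast
            then show "\<bar>indicator C x * (A (\<alpha> (-x) m) - A (\<alpha> (-x) m0))\<bar> \<le> e' * indicator C x"
              using V(3)[of x m] by (cases "x \<in> C") (auto simp: less_imp_le)
          qed
          also have "\<dots> = e' * measure \<mu> C" by (rule haar_int_indicator[OF h Cc])
          also have "\<dots> < e' * (measure \<mu> C + 1)" using e' by simp
          also have "\<dots> = e" unfolding e'_def
          proof -
            have "measure \<mu> C + 1 \<noteq> 0" using mC by linarith
            then show "e / (measure \<mu> C + 1) * (measure \<mu> C + 1) = e" by simp
          qed
          finally show ?thesis by (simp add: dist_real_def)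
        qed
        then show "\<forall>\<^sub>F x in at m0. dist (phi x) (phi m0) < e"
          unfolding eventually_at_topological using UL V by (intro exI[of _ "U \<inter> V"]) auto
      qed
    qed
    then show ?thesis by (simp add: continuous_on_eq_continuous_at)
  qed
  define L where "L = (\<lambda>(b::'m \<Rightarrow> complex) m. complex_of_real (phi m) * b m)"
  have plam: "p_lam \<mu> \<alpha> l a m = complex_of_real (P l m)" for l m
  proof -
    have "(\<lambda>x. complex_of_real (l x) * induced_action \<alpha> x a m) =
          (\<lambda>x. complex_of_real (l x * A (\<alpha> (-x) m)))"
      by (rule ext) (simp add: induced_action_def aA)
    then show ?thesis unfolding p_lam_def P_def by (simp only: integral_complex_of_real)
  qed
  have PphiB: "\<bar>P l m - phi m\<bar> \<le> B" if "l \<in> Bset" for l m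
    using P_bounds[OF that, of m] phi_B[of m] phi0[of m] by linarith
  have phiB: "\<bar>phi m\<bar> \<le> B" for m using phi_B[of m] phi0[of m] by linarith
  have LC0: "L b \<in> C0" if b: "b \<in> C0" for b
    unfolding C0_def mem_Collect_eq
  proof
    show "continuous_on UNIV (L b)" unfolding L_def
      using b phi_cont unfolding C0_def by (auto intro!: continuous_intros)
    show "\<forall>e>0. \<exists>K. compact K \<and> (\<forall>m. m \<notin> K \<longrightarrow> cmod (L b m) < e)"
    proof (intro allI impI)
      fix e :: real assume e: "e > 0"
      then have "e / (B + 1) > 0" using B0 by simp
      then obtain K where K: "compact K" "\<And>m. m \<notin> K \<Longrightarrow> cmod (b m) < e / (B + 1)"
        using b unfolding C0_def by blast
      have "cmod (L b m) < e" if "m \<notin> K" for m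
        unfolding L_def norm_mult norm_of_real
        by (rule small_mult[OF B0 norm_ge_zero K(2)[OF that] phiB])
      then show "\<exists>K. compact K \<and> (\<forall>m. m \<notin> K \<longrightarrow> cmod (L b m) < e)" using K(1) by blast
    qed
  qed
  have conv: "net_tendsto \<mu> (\<lambda>l. (\<lambda>m. p_lam \<mu> \<alpha> l a m * b m)) (L b)" if b: "b \<in> C0" for b
    unfolding net_tendsto_def
  proof (intro allI impI)
    fix e :: real assume e: "e > 0"
    then have "e / (B + 1) > 0" using B0 by simp
    then obtain K where K: "compact K" "\<And>m. m \<notin> K \<Longrightarrow> cmod (b m) < e / (B + 1)"
      using b unfolding C0_def by blast
    show "\<exists>l0\<in>Bset. \<forall>l\<in>Bset. Ble \<mu> l0 l \<longrightarrow> (\<forall>m. cmod (p_lam \<mu> \<alpha> l a m * b m - L b m) \<le> e)"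
    proof (intro bexI ballI impI allI)
      show "indicator (Cs K) \<in> Bset" by (rule ind_Bset[OF Cs_compact[OF K(1)]])
      fix l m assume l: "l \<in> Bset" and le: "Ble \<mu> (indicator (Cs K)) l"
      have eq: "p_lam \<mu> \<alpha> l a m * b m - L b m = complex_of_real (P l m - phi m) * b m"
        unfolding plam L_def by (simp add: algebra_simps)
      show "cmod (p_lam \<mu> \<alpha> l a m * b m - L b m) \<le> e"
      proof (cases "m \<in> K")
        case True
        then show ?thesis unfolding eq using P_eq[OF K(1) True l le] e by simp
      next
        case False
        have "\<bar>P l m - phi m\<bar> * cmod (b m) < e"
          by (rule small_mult[OF B0 norm_ge_zero K(2)[OF False] PphiB[OF l]])
        then show ?thesis unfolding eq norm_mult norm_of_real by simp
      qed
    qed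
  qed
  show ?thesis unfolding alpha_proper_elem_def
  proof (intro conjI exI[of _ L] ballI)
    show "a \<in> C0_pos" by (rule a)
    show "double_centralizer L L" unfolding double_centralizer_def
      using LC0 by (auto simp: L_def fun_eq_iff ac_simps)
    fix b :: "'m \<Rightarrow> complex" assume b: "b \<in> C0"
    show "net_tendsto \<mu> (\<lambda>l. (\<lambda>m. p_lam \<mu> \<alpha> l a m * b m)) (L b)" by (rule conv[OF b])
    show "net_tendsto \<mu> (\<lambda>l. (\<lambda>m. b m * p_lam \<mu> \<alpha> l a m)) (L b)"
      using conv[OF b] by (simp add: mult.commute)
  qed
qed

lemma cut_proper:
  fixes \<mu> :: "'g::{topological_group_add,t2_space} measure"
    and \<alpha> :: "'g \<Rightarrow> 'm::t2_space \<Rightarrow> 'm" and r :: "'m \<Rightarrow> real"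
  assumes lcM: "locally_compact_space (euclidean :: 'm topology)"
    and h: "left_haar_measure \<mu>" and act: "continuous_action \<alpha>"
    and prp: "proper_space_action \<alpha>"
    and rc: "continuous_on UNIV r" and rv: "\<And>e. e > 0 \<Longrightarrow> \<exists>K. compact K \<and> (\<forall>m. m \<notin> K \<longrightarrow> \<bar>r m\<bar> < e)"
    and d: "d > 0"
  shows "alpha_proper_elem \<mu> \<alpha> (\<lambda>m. complex_of_real (max 0 (r m - d)))"
proof -
  obtain K where K: "compact K" "\<And>m. m \<notin> K \<Longrightarrow> \<bar>r m\<bar> < d" using rv[OF d] by blast
  have z: "m \<notin> K \<Longrightarrow> complex_of_real (max 0 (r m - d)) = 0" for m using K(2)[of m] by auto
  have C0: "(\<lambda>m. complex_of_real (max 0 (r m - d))) \<in> C0"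
    unfolding C0_def mem_Collect_eq
  proof
    show "continuous_on UNIV (\<lambda>m. complex_of_real (max 0 (r m - d)))"
      using rc by (intro continuous_intros)
    show "\<forall>e>0. \<exists>K. compact K \<and> (\<forall>m. m \<notin> K \<longrightarrow> cmod (complex_of_real (max 0 (r m - d))) < e)"
      using K(1) z by (intro allI impI exI[of _ K]) auto
  qed
  have "(\<lambda>m. complex_of_real (max 0 (r m - d))) \<in> C0_pos"
    unfolding C0_pos_def using C0 by auto
  then show ?thesis by (rule proper_elem[OF lcM h act prp _ K(1) z])
qed

lemma C0_Re_Im:
  assumes "f \<in> C0"
  shows "continuous_on UNIV (\<lambda>m. Re (f m))" "\<And>e. e > 0 \<Longrightarrow> \<exists>K. compact K \<and> (\<forall>m. m \<notin> K \<longrightarrow> \<bar>Re (f m)\<bar> < e)"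
    "continuous_on UNIV (\<lambda>m. - Re (f m))" "\<And>e. e > 0 \<Longrightarrow> \<exists>K. compact K \<and> (\<forall>m. m \<notin> K \<longrightarrow> \<bar>- Re (f m)\<bar> < e)"
    "continuous_on UNIV (\<lambda>m. Im (f m))" "\<And>e. e > 0 \<Longrightarrow> \<exists>K. compact K \<and> (\<forall>m. m \<notin> K \<longrightarrow> \<bar>Im (f m)\<bar> < e)"
    "continuous_on UNIV (\<lambda>m. - Im (f m))" "\<And>e. e > 0 \<Longrightarrow> \<exists>K. compact K \<and> (\<forall>m. m \<notin> K \<longrightarrow> \<bar>- Im (f m)\<bar> < e)"
proof -
  have c: "continuous_on UNIV f" using assms unfolding C0_def by blast
  then show "continuous_on UNIV (\<lambda>m. Re (f m))" "continuous_on UNIV (\<lambda>m. - Re (f m))"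
    "continuous_on UNIV (\<lambda>m. Im (f m))" "continuous_on UNIV (\<lambda>m. - Im (f m))"
    by (auto intro!: continuous_intros)
  fix e :: real assume e: "e > 0"
  then obtain K where K: "compact K" "\<And>m. m \<notin> K \<Longrightarrow> cmod (f m) < e"
    using assms unfolding C0_def by blast
  have "\<bar>Re (f m)\<bar> \<le> cmod (f m)" "\<bar>Im (f m)\<bar> \<le> cmod (f m)" for m
    by (rule abs_Re_le_cmod abs_Im_le_cmod)+
  then show "\<exists>K. compact K \<and> (\<forall>m. m \<notin> K \<longrightarrow> \<bar>Re (f m)\<bar> < e)"
    "\<exists>K. compact K \<and> (\<forall>m. m \<notin> K \<longrightarrow> \<bar>- Re (f m)\<bar> < e)"
    "\<exists>K. compact K \<and> (\<forall>m. m \<notin> K \<longrightarrow> \<bar>Im (f m)\<bar> < e)"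
    "\<exists>K. compact K \<and> (\<forall>m. m \<notin> K \<longrightarrow> \<bar>- Im (f m)\<bar> < e)"
    using K by (auto intro!: exI[of _ K] dest: order.strict_trans1[rotated])
qed

lemma cut_approx: "d > 0 \<Longrightarrow> \<bar>(t::real) - (max 0 (t - d) - max 0 (- t - d))\<bar> \<le> d"
  by (auto simp: max_def)

lemma dir_space_to_C0:
  fixes \<mu> :: "'g::{topological_group_add,t2_space} measure"
    and \<alpha> :: "'g \<Rightarrow> 'm::t2_space \<Rightarrow> 'm"
  assumes lcM: "locally_compact_space (euclidean :: 'm topology)"
    and h: "left_haar_measure \<mu>" and act: "continuous_action \<alpha>"
    and prp: "proper_space_action \<alpha>"
  shows "proper_C0_action \<mu> \<alpha>"
  unfolding proper_C0_action_def
proof (intro ballI allI impI)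
  fix f :: "'m \<Rightarrow> complex" and e :: real
  assume f: "f \<in> C0" and e: "e > 0"
  define d where "d = e / 3"
  have d: "d > 0" unfolding d_def using e by simp
  note cr = C0_Re_Im[OF f]
  define v where "v = (\<lambda>r::'m\<Rightarrow>real. \<lambda>m. complex_of_real (max 0 (r m - d)))"
  define hh where "hh = (\<lambda>i::nat. if i = 0 then v (\<lambda>m. Re (f m)) else if i = 1 then v (\<lambda>m. - Re (f m))
      else if i = 2 then v (\<lambda>m. Im (f m)) else v (\<lambda>m. - Im (f m)))"
  define c where "c = (\<lambda>i::nat. if i = 0 then 1 else if i = 1 then -1 else if i = 2 then \<i> else - \<i>)"
  define g where "g = (\<lambda>m. \<Sum>i<4. c i * hh i m)"
  have hp: "alpha_proper_elem \<mu> \<alpha> (hh i)" for i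
    unfolding hh_def v_def
    using cut_proper[OF lcM h act prp cr(1,2) d] cut_proper[OF lcM h act prp cr(3,4) d]
      cut_proper[OF lcM h act prp cr(5,6) d] cut_proper[OF lcM h act prp cr(7,8) d]
    by auto
  have gP: "g \<in> P_alpha \<mu> \<alpha>"
    unfolding P_alpha_def using hp g_def by blast
  have "cmod (f m - g m) < e" for m
  proof -
    have gRe: "Re (g m) = max 0 (Re (f m) - d) - max 0 (- Re (f m) - d)"
      and gIm: "Im (g m) = max 0 (Im (f m) - d) - max 0 (- Im (f m) - d)"
      unfolding g_def by (simp_all add: eval_nat_numeral hh_def c_def v_def)
    have "cmod (f m - g m) \<le> \<bar>Re (f m - g m)\<bar> + \<bar>Im (f m - g m)\<bar>" by (rule cmod_le)
    also have "\<dots> \<le> d + d"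
      using cut_approx[OF d, of "Re (f m)"] cut_approx[OF d, of "Im (f m)"]
      by (simp add: gRe gIm)
    also have "\<dots> < e" unfolding d_def using e by simp
    finally show ?thesis .
  qed
  then show "\<exists>g\<in>P_alpha \<mu> \<alpha>. \<forall>m. cmod (f m - g m) < e" using gP by blast
qed

lemma C0_bounded:
  assumes "f \<in> C0" shows "\<exists>B. \<forall>m. cmod (f m) \<le> B"
proof -
  obtain K where K: "compact K" "\<And>m. m \<notin> K \<Longrightarrow> cmod (f m) < 1"
    using assms zero_less_one unfolding C0_def mem_Collect_eq by blast
  have c: "continuous_on UNIV f" using assms unfolding C0_def by blast
  have "compact (f ` K)" by (rule compact_continuous_image[OF continuous_on_subset[OF c] K(1)]) simp
  then obtain b where b: "\<forall>y\<in>f ` K. norm y \<le> b" using compact_imp_bounded bounded_iff by metis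
  have "cmod (f m) \<le> max 1 b" for m
    using b K(2)[of m] by (cases "m \<in> K") force+
  then show ?thesis by blast
qed

lemma plam_real:
  assumes "\<And>m. h m \<in> \<real>"
  shows "p_lam \<mu> \<alpha> l h m = complex_of_real (LINT x|\<mu>. l x * Re (h (\<alpha> (-x) m)))"
proof -
  have "(\<lambda>x. complex_of_real (l x) * induced_action \<alpha> x h m) =
        (\<lambda>x. complex_of_real (l x * Re (h (\<alpha> (-x) m))))"
    by (rule ext) (simp add: induced_action_def of_real_Re[OF assms])
  then show ?thesis unfolding p_lam_def by (simp only: integral_complex_of_real)
qed

lemma intg_gen:
  fixes \<mu> :: "'g::{topological_group_add,t2_space} measure"
    and \<alpha> :: "'g \<Rightarrow> 'm::t2_space \<Rightarrow> 'm" and u :: "'m \<Rightarrow> real"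
  assumes h: "left_haar_measure \<mu>" and act: "continuous_action \<alpha>"
    and l: "l \<in> borel_measurable borel" "\<And>x. \<bar>l x\<bar> \<le> 1" and C: "compact C" "\<And>x. x \<notin> C \<Longrightarrow> l x = 0"
    and u: "continuous_on UNIV u" "\<And>m. \<bar>u m\<bar> \<le> Bu"
  shows "integrable \<mu> (\<lambda>x. l x * u (\<alpha> (-x) m))"
proof (rule haar_int_bounded[OF h _ C(1)])
  note af = action_facts[OF act]
  have "(\<lambda>x. u (\<alpha> (-x) m)) \<in> borel_measurable borel"
    by (rule borel_measurable_continuous_onI, rule continuous_on_compose2[OF u(1) af(5)]) auto
  then show "(\<lambda>x. l x * u (\<alpha> (- x) m)) \<in> borel_measurable borel" using l(1) by measurable
  show "x \<notin> C \<Longrightarrow> l x * u (\<alpha> (- x) m) = 0" for x using C(2) by simp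
  show "\<bar>l x * u (\<alpha> (- x) m)\<bar> \<le> Bu" for x
  proof -
    have "\<bar>l x * u (\<alpha> (- x) m)\<bar> = \<bar>l x\<bar> * \<bar>u (\<alpha> (- x) m)\<bar>" by (simp add: abs_mult)
    also have "\<dots> \<le> 1 * Bu" using l(2)[of x] u(2)[of "\<alpha> (-x) m"] by (intro mult_mono) auto
    finally show ?thesis by simp
  qed
qed

lemma urysohn_C0:
  fixes K :: "'m::t2_space set"
  assumes lcM: "locally_compact_space (euclidean :: 'm topology)" and K: "compact K"
  obtains f0 :: "'m \<Rightarrow> real" and L where "continuous_on UNIV f0" "\<And>m. 0 \<le> f0 m \<and> f0 m \<le> 1"
    "\<And>m. m \<in> K \<Longrightarrow> f0 m = 1" "compact L" "\<And>m. m \<notin> L \<Longrightarrow> f0 m = 0"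
proof -
  have hs: "Hausdorff_space (euclidean :: 'm topology)"
  proof (unfold Hausdorff_space_def, intro allI impI)
    fix x y :: 'm assume "x \<in> topspace euclidean \<and> y \<in> topspace euclidean \<and> x \<noteq> y"
    then have "x \<noteq> y" by blast
    then obtain U V where "open U" "open V" "x \<in> U" "y \<in> V" "U \<inter> V = {}"
      using hausdorff[OF \<open>x \<noteq> y\<close>] by (elim exE conjE)
    then have "openin euclidean U" "openin euclidean V" "x \<in> U" "y \<in> V" "disjnt U V"
      using open_openin[THEN iffD1] unfolding disjnt_def by blast+
    then show "\<exists>U V. openin euclidean U \<and> openin euclidean V \<and> x \<in> U \<and> y \<in> V \<and> disjnt U V"
      by blast
  qed
  have reg: "regular_space (euclidean :: 'm topology)"
    by (rule locally_compact_Hausdorff_imp_regular_space[OF lcM hs])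
  have cr: "completely_regular_space (euclidean :: 'm topology)"
    using completely_regular_eq_regular_space[OF lcM] reg by blast
  have Kc: "compactin euclidean K" using K compactin_euclidean_iff[THEN iffD2] by blast
  have "\<forall>K. compactin euclidean K \<longrightarrow> (\<exists>U L. openin euclidean U \<and> compactin euclidean L \<and>
      closedin euclidean L \<and> K \<subseteq> U \<and> U \<subseteq> (L::'m set))"
    using lcM unfolding locally_compact_space_compact_closed_compact[OF disjI1[OF hs]] .
  then obtain U L where UL: "openin euclidean U" "compactin euclidean L" "K \<subseteq> U" "U \<subseteq> L"
    using Kc by meson
  have "open U" using UL(1) open_openin[THEN iffD2] by blast
  then have cl: "closedin euclidean (- U)" using closed_Compl closed_closedin[THEN iffD1] by blast
  have dj: "disjnt K (- U)" using UL(3) by (auto simp: disjnt_def)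
  obtain f :: "'m \<Rightarrow> real" where f: "continuous_map euclidean (top_of_set {0..1}) f" "f ` (- U) \<subseteq> {0}" "f ` K \<subseteq> {1}"
    by (rule Urysohn_completely_regular_compact_closed[of 0 1 euclidean K "- U", OF zero_le_one cr Kc cl dj]) blast
  note f1 = f(1)[unfolded continuous_map_in_subtopology]
  have fc: "continuous_on UNIV f"
    using conjunct1[OF f1] continuous_map_iff_continuous2[THEN iffD1] by blast
  have fr: "\<And>m. f m \<in> {0..1}"
    using conjunct2[OF f1] unfolding Pi_def by simp
  show ?thesis
  proof (rule that[of f L])
    show "continuous_on UNIV f" by (rule fc)
    show "0 \<le> f m \<and> f m \<le> 1" for m using fr[of m] by auto
    show "m \<in> K \<Longrightarrow> f m = 1" for m using f(3) by auto
    show "compact L" using UL(2) compactin_euclidean_iff[THEN iffD1] by blast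
    show "m \<notin> L \<Longrightarrow> f m = 0" for m using f(2) UL(4) by auto
  qed
qed

lemma dir_C0_to_space:
  fixes \<mu> :: "'g::{topological_group_add,t2_space} measure"
    and \<alpha> :: "'g \<Rightarrow> 'm::t2_space \<Rightarrow> 'm"
  assumes lcG: "locally_compact_space (euclidean :: 'g topology)"
    and lcM: "locally_compact_space (euclidean :: 'm topology)"
    and h: "left_haar_measure \<mu>" and act: "continuous_action \<alpha>"
    and pc: "proper_C0_action \<mu> \<alpha>"
  shows "proper_space_action \<alpha>"
proof -
  note af = action_facts[OF act]
  have key: "\<exists>D. compact D \<and> (\<forall>m x. m \<in> K1 \<longrightarrow> \<alpha> x m \<in> K2 \<longrightarrow> x \<in> D)"
    if K1: "compact K1" and K2: "compact K2" for K1 K2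
  proof -
    obtain f0 :: "'m \<Rightarrow> real" and L where f0: "continuous_on UNIV f0" "\<And>m. 0 \<le> f0 m \<and> f0 m \<le> 1"
      "\<And>m. m \<in> K1 \<union> K2 \<Longrightarrow> f0 m = 1" "compact L" "\<And>m. m \<notin> L \<Longrightarrow> f0 m = 0"
      by (rule urysohn_C0[OF lcM compact_Un[OF K1 K2]]) blast
    define F where "F = (\<lambda>m. complex_of_real (f0 m))"
    have FC0: "F \<in> C0"
      unfolding C0_def mem_Collect_eq F_def
    proof
      show "continuous_on UNIV (\<lambda>m. complex_of_real (f0 m))" using f0(1) by (intro continuous_intros)
      show "\<forall>e>0. \<exists>K. compact K \<and> (\<forall>m. m \<notin> K \<longrightarrow> cmod (complex_of_real (f0 m)) < e)"
        using f0(4,5) by (intro allI impI exI[of _ L]) auto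
    qed
    have F1: "F m = 1" if "m \<in> K1 \<union> K2" for m using f0(3)[OF that] unfolding F_def by simp
    have "\<exists>g\<in>P_alpha \<mu> \<alpha>. \<forall>m. cmod (F m - g m) < 1/2"
      using pc[unfolded proper_C0_action_def, rule_format, OF FC0, of "1/2"] by simp
    then obtain g where gP: "g \<in> P_alpha \<mu> \<alpha>" and gF: "\<And>m. cmod (F m - g m) < 1/2" by blast
    obtain n :: nat and c :: "nat \<Rightarrow> complex" and hh :: "nat \<Rightarrow> 'm \<Rightarrow> complex" where hp: "\<And>i. i < n \<Longrightarrow> alpha_proper_elem \<mu> \<alpha> (hh i)"
      and g: "g = (\<lambda>m. \<Sum>i<n. c i * hh i m)"
      using gP unfolding P_alpha_def mem_Collect_eq by blast
    have hpos: "hh i \<in> C0_pos" if "i < n" for i using hp[OF that] unfolding alpha_proper_elem_def by blast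
    have hC0: "hh i \<in> C0" if "i < n" for i using hpos[OF that] unfolding C0_pos_def by blast
    have hreal: "hh i m \<in> \<real>" "0 \<le> Re (hh i m)" if "i < n" for i m
      using hpos[OF that] unfolding C0_pos_def by auto
    have hcont: "continuous_on UNIV (\<lambda>m. Re (hh i m))" if "i < n" for i
      using hC0[OF that] unfolding C0_def by (auto intro!: continuous_intros)
    have "\<forall>i. \<exists>B. i < n \<longrightarrow> (\<forall>m. cmod (hh i m) \<le> B)" using C0_bounded hC0 by metis
    then obtain Bh where Bh: "\<And>i m. i < n \<Longrightarrow> cmod (hh i m) \<le> Bh i" by metis
    have Bh': "\<bar>Re (hh i m)\<bar> \<le> Bh i" if "i < n" for i m
      using abs_Re_le_cmod[of "hh i m"] Bh[OF that, of m] by linarith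
    have Bh'': "Re (hh i m) \<le> Bh i" if "i < n" for i m
      using Bh'[OF that, of m] by (meson abs_le_D1)
    have cmodh: "cmod (hh i m) = Re (hh i m)" if "i < n" for i m
    proof -
      have "hh i m = complex_of_real (Re (hh i m))" using hreal(1)[OF that] by (simp add: of_real_Re)
      then have "cmod (hh i m) = \<bar>Re (hh i m)\<bar>" by (metis norm_of_real)
      then show ?thesis using hreal(2)[OF that] by simp
    qed
    define w where "w = (\<lambda>i. cmod (c i))"
    define W where "W = (\<Sum>i<n. w i)"
    have W0: "0 \<le> W" unfolding W_def w_def by (simp add: sum_nonneg)
    define H where "H = (\<lambda>m. \<Sum>i<n. w i * Re (hh i m))"
    have Hcont: "continuous_on UNIV H" unfolding H_def
      by (intro continuous_on_sum continuous_on_mult continuous_on_const) (auto intro: hcont)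
    have H0: "0 \<le> H m" for m unfolding H_def w_def using hreal(2) by (auto intro!: sum_nonneg)
    define HB where "HB = (\<Sum>i<n. w i * Bh i)"
    have HB: "\<bar>H m\<bar> \<le> HB" for m
    proof -
      have "\<bar>H m\<bar> = H m" using H0 by simp
      also have "\<dots> \<le> HB" unfolding H_def HB_def
        by (intro sum_mono mult_left_mono) (use Bh'' in \<open>auto simp: w_def\<close>)
      finally show ?thesis .
    qed
    have Hhalf: "1/2 < H m" if "m \<in> K1 \<union> K2" for m
    proof -
      have "cmod (1 - g m) < 1/2" using gF[of m] F1[OF that] by simp
      moreover have "1 \<le> cmod (1 - g m) + cmod (g m)"
        using norm_triangle_ineq[of "1 - g m" "g m"] by simp
      ultimately have "1/2 < cmod (g m)" by linarith
      also have "cmod (g m) \<le> (\<Sum>i<n. cmod (c i * hh i m))" unfolding g by (rule norm_sum)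
      also have "\<dots> = H m" unfolding H_def w_def norm_mult
        by (intro sum.cong refl) (simp add: cmodh)
      finally show ?thesis .
    qed
    have cf: "continuous_on UNIV (\<lambda>p. H (\<alpha> (snd p) (fst p)))"
    proof -
      have "continuous_on UNIV (\<lambda>p. (\<lambda>q. \<alpha> (fst q) (snd q)) ((\<lambda>p::'m\<times>'g. (snd p, fst p)) p))"
        by (rule continuous_on_compose2[OF af(3)]) (intro continuous_intros, simp)
      then have "continuous_on UNIV (\<lambda>p::'m\<times>'g. \<alpha> (snd p) (fst p))" by simp
      then show ?thesis by (rule continuous_on_compose2[OF Hcont]) simp
    qed
    obtain V0 where V0: "open V0" "0 \<in> V0"
      "\<And>k v. k \<in> K2 \<Longrightarrow> v \<in> V0 \<Longrightarrow> \<bar>H (\<alpha> v k) - H (\<alpha> 0 k)\<bar> < 1/4"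
      using unif_tube[of "\<lambda>k v. H (\<alpha> v k)", OF _ K2, of "1/4" 0] cf by auto
    have "\<forall>x::'g. \<exists>U. open U \<and> (\<exists>K. compact K \<and> x \<in> U \<and> U \<subseteq> K)"
      using lcG unfolding locally_compact_space_def by (simp add: compactin_euclidean_iff)
    then obtain U0 Q0 where UQ: "open U0" "compact Q0" "(0::'g) \<in> U0" "U0 \<subseteq> Q0" by blast
    define V where "V = V0 \<inter> U0"
    have V: "open V" "0 \<in> V" "V \<subseteq> Q0" unfolding V_def using V0 UQ by auto
    have Hq: "1/4 < H (\<alpha> v k)" if "k \<in> K2" "v \<in> V" for k v
    proof -
      have "v \<in> V0" using that(2) unfolding V_def by blast
      then have "\<bar>H (\<alpha> v k) - H k\<bar> < 1/4" using V0(3)[OF that(1), of v] af(1)[of k] by simp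
      moreover have "1/2 < H k" using Hhalf[of k] that(1) by blast
      ultimately show ?thesis unfolding abs_less_iff by linarith
    qed
    define N where "N = uminus -` V"
    have Nopen: "open N" unfolding N_def by (rule open_vimage[OF V(1)]) (intro continuous_intros)
    have N0: "0 \<in> N" unfolding N_def using V(2) by simp
    have NQ: "N \<subseteq> uminus ` Q0"
    proof
      fix y assume "y \<in> N"
      then have "-y \<in> Q0" using V(3) unfolding N_def by auto
      then show "y \<in> uminus ` Q0" by (metis image_eqI minus_minus)
    qed
    have Q0c: "compact (uminus ` Q0)" by (intro compact_continuous_image continuous_intros UQ(2))
    have Nfin: "emeasure \<mu> N \<noteq> top"
    proof -
      have "emeasure \<mu> N \<le> emeasure \<mu> (uminus ` Q0)"
        by (rule emeasure_mono[OF NQ compact_in_sets[OF h Q0c]])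
      also have "\<dots> < \<infinity>" by (rule haar_compact_fin[OF h Q0c])
      finally show ?thesis by simp
    qed
    define \<delta> where "\<delta> = measure \<mu> N"
    have \<delta>: "\<delta> > 0"
    proof -
      have "0 < emeasure \<mu> N" by (rule haar_open_pos[OF h Nopen N0])
      then show ?thesis unfolding \<delta>_def using emeasure_eq_ennreal_measure[OF Nfin]
        by (simp add: ennreal_less_zero_iff)
    qed
    define e' where "e' = \<delta> / (16 * (W + 1))"
    have e': "e' > 0" unfolding e'_def using \<delta> W0 by simp
    have nets: "\<exists>S Lf. i < n \<longrightarrow> (compact S \<and> (\<forall>C'. compact C' \<longrightarrow> S \<subseteq> C' \<longrightarrow>
        (\<forall>m. cmod (p_lam \<mu> \<alpha> (indicator C') (hh i) m * F m - Lf m) \<le> e')))" for i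
    proof (cases "i < n")
      case True
      obtain LL RR where LR: "\<forall>b\<in>C0. net_tendsto \<mu> (\<lambda>l. (\<lambda>m. p_lam \<mu> \<alpha> l (hh i) m * b m)) (LL b)"
        using hp[OF True] unfolding alpha_proper_elem_def by blast
      then have "net_tendsto \<mu> (\<lambda>l. (\<lambda>m. p_lam \<mu> \<alpha> l (hh i) m * F m)) (LL F)" using FC0 by blast
      then obtain l0 where l0: "l0 \<in> Bset"
        "\<And>l. l \<in> Bset \<Longrightarrow> Ble \<mu> l0 l \<Longrightarrow> (\<forall>m. cmod (p_lam \<mu> \<alpha> l (hh i) m * F m - LL F m) \<le> e')"
        unfolding net_tendsto_def using e' by blast
      obtain S where S: "compact S" "\<And>x. x \<notin> S \<Longrightarrow> l0 x = 0" using l0(1) unfolding Bset_def by blast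
      have "\<forall>C'. compact C' \<longrightarrow> S \<subseteq> C' \<longrightarrow>
          (\<forall>m. cmod (p_lam \<mu> \<alpha> (indicator C') (hh i) m * F m - LL F m) \<le> e')"
      proof (intro allI impI)
        fix C' :: "'g set" and m :: 'm assume C': "compact C'" "S \<subseteq> C'"
        have "\<And>x. x \<notin> C' \<Longrightarrow> l0 x = 0" using S C' by blast
        then have "Ble \<mu> l0 (indicator C')" using Bset_le_ind l0(1) C'(1) by blast
        then show "cmod (p_lam \<mu> \<alpha> (indicator C') (hh i) m * F m - LL F m) \<le> e'"
          using l0(2)[OF ind_Bset[OF C'(1)]] by blast
      qed
      then show ?thesis using S(1) by blast
    qed simp
    then obtain S Lf where SL: "\<And>i. i < n \<Longrightarrow> compact (S i)"
      "\<And>i C' m. i < n \<Longrightarrow> compact C' \<Longrightarrow> S i \<subseteq> C' \<Longrightarrow>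
         cmod (p_lam \<mu> \<alpha> (indicator C') (hh i) m * F m - Lf i m) \<le> e'"
      by metis
    define C where "C = (\<Union>i<n. S i)"
    have Cc: "compact C" unfolding C_def by (intro compact_UN) (auto intro: SL(1))
    define Q where "Q = (\<lambda>i C' m. LINT x|\<mu>. indicator C' x * Re (hh i (\<alpha> (-x) m)))"
    have close: "\<bar>Q i C2 m - Q i C m\<bar> \<le> 2 * e'"
      if i: "i < n" and C2: "compact C2" "C \<subseteq> C2" and m: "m \<in> K1" for i C2 m
    proof -
      have SC: "S i \<subseteq> C" unfolding C_def using i by blast
      have pq: "p_lam \<mu> \<alpha> (indicator C') (hh i) m = complex_of_real (Q i C' m)" for C'
        unfolding Q_def by (rule plam_real) (rule hreal(1)[OF i])
      have Fm: "F m = 1" using F1 m by blast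
      have a1: "cmod (complex_of_real (Q i C2 m) - Lf i m) \<le> e'"
        using SL(2)[OF i C2(1), of m] SC C2(2) Fm pq by auto
      have a2: "cmod (complex_of_real (Q i C m) - Lf i m) \<le> e'"
        using SL(2)[OF i Cc, of m] SC Fm pq by auto
      have "\<bar>Q i C2 m - Q i C m\<bar> = cmod (complex_of_real (Q i C2 m) - complex_of_real (Q i C m))"
        by (metis norm_of_real of_real_diff)
      also have "\<dots> \<le> cmod (complex_of_real (Q i C2 m) - Lf i m) + cmod (complex_of_real (Q i C m) - Lf i m)"
        by (rule norm_diff_triangle_le[OF order_refl], simp add: norm_minus_commute)
      also have "\<dots> \<le> 2 * e'" using a1 a2 by simp
      finally show ?thesis .
    qed
    define D where "D = (\<lambda>p. - (fst p + snd p)) ` (C \<times> Q0)"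
    have Dc: "compact D" unfolding D_def
      by (intro compact_continuous_image compact_Times Cc UQ(2) continuous_intros)
    have "\<forall>m x. m \<in> K1 \<longrightarrow> \<alpha> x m \<in> K2 \<longrightarrow> x \<in> D"
    proof (intro allI impI)
      fix m x assume m: "m \<in> K1" and xm: "\<alpha> x m \<in> K2"
      show "x \<in> D"
      proof (rule ccontr)
        assume xD: "x \<notin> D"
        define T where "T = {y. -y + -x \<in> V}"
        define T2 where "T2 = (\<lambda>v. -(v + x)) ` Q0"
        have T2c: "compact T2" unfolding T2_def
          by (intro compact_continuous_image continuous_intros UQ(2))
        have TT2: "T \<subseteq> T2"
        proof
          fix y assume "y \<in> T"
          then have v: "-y + -x \<in> Q0" using V(3) unfolding T_def by auto
          have "y = -((-y + -x) + x)" by (simp add: add.assoc)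
          then show "y \<in> T2" unfolding T2_def using v by blast
        qed
        have TC: "T \<inter> C = {}"
        proof (rule ccontr)
          assume "T \<inter> C \<noteq> {}"
          then obtain y where y: "y \<in> T" "y \<in> C" by blast
          then have v: "-y + -x \<in> Q0" using V(3) unfolding T_def by auto
          have "x = -(fst (y, -y + -x) + snd (y, -y + -x))"
            by (simp only: fst_conv snd_conv add.assoc[symmetric] add.right_inverse add_0_left minus_minus)
          then have "x \<in> D" unfolding D_def using y(2) v by (intro image_eqI) auto
          then show False using xD by blast
        qed
        have Topen: "open T"
        proof -
          have "T = (\<lambda>y. -y + -x) -` V" unfolding T_def by auto
          also have "open \<dots>" by (rule open_vimage[OF V(1)]) (intro continuous_intros)
          finally show ?thesis .
        qed
        have Tsets: "T \<in> sets \<mu>" using borel_open[OF Topen] haar_sets[OF h] by simp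
        have Teq: "T = (\<lambda>w. -x + w) ` N"
          unfolding transl_image_eq T_def N_def by (auto simp: minus_add)
        have mT: "measure \<mu> T = \<delta>"
          unfolding \<delta>_def measure_def Teq using haar_transl[OF h borel_open[OF Nopen]] by simp
        have Tfin: "emeasure \<mu> T < \<infinity>"
          using emeasure_mono[OF TT2 compact_in_sets[OF h T2c]] haar_compact_fin[OF h T2c] by simp
        define C2 where "C2 = C \<union> T2"
        have C2c: "compact C2" unfolding C2_def by (intro compact_Un Cc T2c)
        have CC2: "C \<subseteq> C2" unfolding C2_def by blast
        have indm: "indicator C' \<in> borel_measurable borel" if "compact C'" for C' :: "'g set"
          by (intro borel_measurable_indicator borel_closed compact_imp_closed that)
        have ints: "integrable \<mu> (\<lambda>y. indicator C' y * Re (hh i (\<alpha> (-y) m)))"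
          if "i < n" "compact C'" for i C'
          by (rule intg_gen[OF h act indm[OF that(2)] _ that(2) _ hcont[OF that(1)] Bh'[OF that(1)]])
             (auto simp: indicator_def)
        have lin: "(\<Sum>i<n. w i * (Q i C2 m - Q i C m)) =
            (LINT y|\<mu>. (indicator C2 y - indicator C y) * H (\<alpha> (-y) m))"
        proof -
          have "(\<Sum>i<n. w i * (Q i C2 m - Q i C m)) =
              (\<Sum>i<n. LINT y|\<mu>. w i * ((indicator C2 y - indicator C y) * Re (hh i (\<alpha> (-y) m))))"
          proof (intro sum.cong refl)
            fix i assume "i \<in> {..<n}"
            then have i: "i < n" by simp
            have "Q i C2 m - Q i C m = (LINT y|\<mu>. indicator C2 y * Re (hh i (\<alpha> (-y) m))
                 - indicator C y * Re (hh i (\<alpha> (-y) m)))"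
              unfolding Q_def by (rule Bochner_Integration.integral_diff[symmetric, OF ints[OF i C2c] ints[OF i Cc]])
            then show "w i * (Q i C2 m - Q i C m) =
                (LINT y|\<mu>. w i * ((indicator C2 y - indicator C y) * Re (hh i (\<alpha> (-y) m))))"
              by (simp add: integral_mult_right_zero left_diff_distrib)
          qed
          also have "\<dots> = (LINT y|\<mu>. (\<Sum>i<n. w i * ((indicator C2 y - indicator C y) * Re (hh i (\<alpha> (-y) m)))))"
            by (rule Bochner_Integration.integral_sum[symmetric])
               (auto intro!: integrable_mult_right Bochner_Integration.integrable_diff ints C2c Cc
                 simp: left_diff_distrib)
          also have "\<dots> = (LINT y|\<mu>. (indicator C2 y - indicator C y) * H (\<alpha> (-y) m))"
            unfolding H_def by (simp add: sum_distrib_left ac_simps)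
          finally show ?thesis .
        qed
        have up: "(\<Sum>i<n. w i * (Q i C2 m - Q i C m)) \<le> 2 * e' * W"
        proof -
          have "(\<Sum>i<n. w i * (Q i C2 m - Q i C m)) \<le> (\<Sum>i<n. 2 * e' * w i)"
          proof (rule sum_mono)
            fix i assume "i \<in> {..<n}"
            then have i: "i < n" by simp
            have w0: "0 \<le> w i" unfolding w_def by simp
            have "w i * (Q i C2 m - Q i C m) \<le> w i * (2 * e')"
              using close[OF i C2c CC2 m] by (intro mult_left_mono[OF _ w0]) linarith
            then show "w i * (Q i C2 m - Q i C m) \<le> 2 * e' * w i" by (simp add: ac_simps)
          qed
          also have "\<dots> = 2 * e' * W" unfolding W_def by (simp add: sum_distrib_left)
          finally show ?thesis .
        qed
        have low: "\<delta> / 4 \<le> (LINT y|\<mu>. (indicator C2 y - indicator C y) * H (\<alpha> (-y) m))"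
        proof -
          have "\<delta> / 4 = (LINT y|\<mu>. indicator T y * (1/4::real))"
            by (simp add: integral_mult_left_zero integral_indicator haar_space[OF h] mT)
          also have "\<dots> \<le> (LINT y|\<mu>. (indicator C2 y - indicator C y) * H (\<alpha> (-y) m))"
          proof (rule integral_mono)
            show "integrable \<mu> (\<lambda>y. indicator T y * (1/4::real))"
              by (intro integrable_mult_left integrable_real_indicator Tsets Tfin)
            show "integrable \<mu> (\<lambda>y. (indicator C2 y - indicator C y) * H (\<alpha> (-y) m))"
            proof (rule intg_gen[OF h act _ _ C2c _ Hcont HB])
              show "(\<lambda>y. indicator C2 y - indicator C y :: real) \<in> borel_measurable borel"
                using indm[OF C2c] indm[OF Cc] by measurable
              show "\<bar>indicator C2 y - indicator C y :: real\<bar> \<le> 1" for y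
                by (auto simp: indicator_def)
              show "y \<notin> C2 \<Longrightarrow> indicator C2 y - indicator C y = (0::real)" for y
                using CC2 by (auto simp: indicator_def)
            qed
            fix y
            show "indicator T y * (1/4::real) \<le> (indicator C2 y - indicator C y) * H (\<alpha> (-y) m)"
            proof (cases "y \<in> T")
              case True
              then have yC2: "y \<in> C2" and yC: "y \<notin> C" using TT2 TC unfolding C2_def by auto
              have v: "-y + -x \<in> V" using True unfolding T_def by simp
              have "\<alpha> (-y + -x) (\<alpha> x m) = \<alpha> (-y) m"
                by (simp only: af(2)[symmetric] add.assoc add.left_inverse add_0_right)
              then have "1/4 < H (\<alpha> (-y) m)" using Hq[OF xm v] by simp
              then show ?thesis using yC2 yC True by simp
            next
              case False
              have "0 \<le> indicator C2 y - (indicator C y :: real)" using CC2 by (auto simp: indicator_def)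
              then show ?thesis using False H0 by simp
            qed
          qed
          finally show ?thesis .
        qed
        have "2 * e' * W \<le> 2 * e' * (W + 1)" using e' by simp
        also have "\<dots> = \<delta> / 8" unfolding e'_def using W0 by (simp add: field_simps)
        finally have "2 * e' * W < \<delta> / 4" using \<delta> by linarith
        then show False using low lin up by linarith
      qed
    qed
    then show ?thesis using Dc by blast
  qed
  show ?thesis unfolding proper_space_action_def
  proof (intro allI impI)
    fix K :: "('m \<times> 'm) set" assume K: "compact K"
    have K1: "compact (fst ` K)" and K2: "compact (snd ` K)"
      using K by (auto intro!: compact_continuous_image continuous_intros)
    obtain D where D: "compact D" "\<And>m x. m \<in> fst ` K \<Longrightarrow> \<alpha> x m \<in> snd ` K \<Longrightarrow> x \<in> D"
      using key[OF K1 K2] by blast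
    have cP: "continuous_on UNIV (\<lambda>p::'m\<times>'g. (fst p, \<alpha> (snd p) (fst p)))"
    proof -
      have "continuous_on UNIV (\<lambda>p. (\<lambda>q. \<alpha> (fst q) (snd q)) ((\<lambda>p::'m\<times>'g. (snd p, fst p)) p))"
        by (rule continuous_on_compose2[OF af(3)]) (intro continuous_intros, simp)
      then have "continuous_on UNIV (\<lambda>p::'m\<times>'g. \<alpha> (snd p) (fst p))" by simp
      then show ?thesis by (intro continuous_on_Pair continuous_intros)
    qed
    have cl: "closed ((\<lambda>p::'m\<times>'g. (fst p, \<alpha> (snd p) (fst p))) -` K)"
      by (rule closed_vimage[OF compact_imp_closed[OF K] cP])
    have eq: "{(m, x). (m, \<alpha> x m) \<in> K} = (fst ` K \<times> D) \<inter> ((\<lambda>p. (fst p, \<alpha> (snd p) (fst p))) -` K)"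
    proof (intro set_eqI iffI)
      fix p :: "'m \<times> 'g" assume "p \<in> {(m, x). (m, \<alpha> x m) \<in> K}"
      then obtain m x where p: "p = (m, x)" "(m, \<alpha> x m) \<in> K" by blast
      then have "m \<in> fst ` K" "\<alpha> x m \<in> snd ` K" by force+
      then show "p \<in> (fst ` K \<times> D) \<inter> ((\<lambda>p. (fst p, \<alpha> (snd p) (fst p))) -` K)"
        using D(2) p by auto
    qed auto
    show "compact {(m, x). (m, \<alpha> x m) \<in> K}" unfolding eq
      by (rule compact_Int_closed[OF compact_Times[OF K1 D(1)] cl])
  qed
qed

theorem theorem4p7:
  fixes \<mu> :: "'g::{topological_group_add,t2_space} measure"
    and \<alpha> :: "'g \<Rightarrow> 'm::t2_space \<Rightarrow> 'm"
  assumes "locally_compact_space (euclidean :: 'g topology)"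
    and "locally_compact_space (euclidean :: 'm topology)"
    and "left_haar_measure \<mu>"
    and "continuous_action \<alpha>"
  shows "proper_C0_action \<mu> \<alpha> \<longleftrightarrow> proper_space_action \<alpha>"
proof
  assume "proper_C0_action \<mu> \<alpha>"
  then show "proper_space_action \<alpha>" by (rule dir_C0_to_space[OF assms(1,2,3,4)])
next
  assume "proper_space_action \<alpha>"
  then show "proper_C0_action \<mu> \<alpha>" by (rule dir_space_to_C0[OF assms(2,3,4)])
qed

end
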